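(* Let $\mathcal{P}$ be a program and let $\mathcal{P}'$ be obtained from $\mathcal{P}$ by replacing a labelled instruction $\ell_1: r := x;\ \texttt{goto}\ \ell_2$ of a thread $t$ (where $x$ is a shared variable and $r$ a register of $t$) with $\ell_1: \texttt{havoc}(r,\phi(x,\vec r));\ \texttt{goto}\ \ell_2$, where $\phi$ is such that $\forall x, r.\ x = r \implies \phi(x,\vec r)$ is valid. Then $\mathcal{P} \preceq_{SC} \mathcal{P}'$ and $\mathcal{P} \preceq_{TSO} \mathcal{P}'$.
   Context: Programs. A program has a finite set of shared variables and a finite set of threads; each thread $t$ has registers $\vec r_t$, a start label, and a finite set of labelled instructions "$\ell: \mathit{inst};\ \texttt{goto}\ \ell'$", where $\mathit{inst}$ is one of: $x := e$ (write to a shared variable), $r := e$, $r := x$ (read of a shared variable), $\texttt{fence}$, $r := \texttt{cas}(x,e_1,e_2)$, $\texttt{skip}$, $\texttt{assume}\ b$, with $e,e_1,e_2,b$ expressions over the thread's registers; additionally a havoc instruction $\texttt{havoc}(r,\phi)$, where $\phi$ is a boolean expression over registers of the thread and a single shared variable $x$, assigns to $r$ any value $v$ such that $\phi$ holds when $r$ is interpreted as $v$, the other registers by their current values, and $x$ by its current value as seen by the thread (under TSO: the latest value for $x$ in the thread's store buffer if any, else the memory value). All variables and registers start at $0$. Semantics. Under TSO, each thread has a FIFO store buffer: a write $x:=e$ appends $(x,v)$ to the buffer, and buffered writes are nondeterministically flushed (oldest first) to memory; reads take the latest buffered value for the variable if any, else the memory value; $\texttt{fence}$ and $\texttt{cas}$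 require the thread's buffer to be empty; $\texttt{cas}(x,e_1,e_2)$ atomically sets $x$ to the value of $e_2$ and $r:=1$ if $x$ equals the value of $e_1$, else sets $r:=0$; $\texttt{assume}\ b$ blocks unless $b$ holds. Under SC there are no buffers: writes update memory immediately and reads read memory. Executions start from the initial state (and, under TSO, end with empty buffers). Abstraction. For $\mathbb{M}\in\{SC, TSO\}$, $\mathcal{P}\preceq_{\mathbb{M}}\mathcal{P}'$ means that every valuation of the shared variables reachable from the initial state in an $\mathbb{M}$ execution of $\mathcal{P}$ is also reachable in an $\mathbb{M}$ execution of $\mathcal{P}'$. *)

theory Defs
  imports Main
begin

text \<open>Register valuations of a thread and shared-memory valuations. Values are integers.
  Expressions over a thread's registers are represented semantically as functions of the
  register valuation.\<close>

type_synonym 'r regval = "'r \<Rightarrow> int"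
type_synonym 'x memval = "'x \<Rightarrow> int"

datatype ('x, 'r) inst =
    Write 'x "'r regval \<Rightarrow> int"
  | Assign 'r "'r regval \<Rightarrow> int"
  | Read 'r 'x
  | Fence
  | Cas 'r 'x "'r regval \<Rightarrow> int" "'r regval \<Rightarrow> int"
  | Skip
  | Assume "'r regval \<Rightarrow> bool"
  | Havoc 'r 'x "'r regval \<Rightarrow> int \<Rightarrow> bool"

text \<open>A program: a set of threads, a start label per thread, and per thread a set of
  labelled instructions (l, inst, l') meaning "l: inst; goto l'".\<close>

record ('t, 'l, 'x, 'r) program =
  threads :: "'t set"
  start :: "'t \<Rightarrow> 'l"
  code :: "'t \<Rightarrow> ('l \<times> ('x, 'r) inst \<times> 'l) set"

definition wf_program :: "('t, 'l, 'x, 'r) program \<Rightarrow> bool" where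
  "wf_program P \<longleftrightarrow> finite (threads P) \<and> (\<forall>t \<in> threads P. finite (code P t))"

inductive sc_inst :: "('x, 'r) inst \<Rightarrow> 'r regval \<Rightarrow> 'x memval \<Rightarrow> 'r regval \<Rightarrow> 'x memval \<Rightarrow> bool" where
  sc_write: "sc_inst (Write x e) \<rho> m \<rho> (m(x := e \<rho>))"
| sc_assign: "sc_inst (Assign r e) \<rho> m (\<rho>(r := e \<rho>)) m"
| sc_read: "sc_inst (Read r x) \<rho> m (\<rho>(r := m x)) m"
| sc_fence: "sc_inst Fence \<rho> m \<rho> m"
| sc_cas_succ: "m x = e1 \<rho> \<Longrightarrow> sc_inst (Cas r x e1 e2) \<rho> m (\<rho>(r := 1)) (m(x := e2 \<rho>))"
| sc_cas_fail: "m x \<noteq> e1 \<rho> \<Longrightarrow> sc_inst (Cas r x e1 e2) \<rho> m (\<rho>(r := 0)) m"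
| sc_skip: "sc_inst Skip \<rho> m \<rho> m"
| sc_assume: "b \<rho> \<Longrightarrow> sc_inst (Assume b) \<rho> m \<rho> m"
| sc_havoc: "\<phi> (\<rho>(r := v)) (m x) \<Longrightarrow> sc_inst (Havoc r x \<phi>) \<rho> m (\<rho>(r := v)) m"

type_synonym ('t, 'l, 'x, 'r) sc_config = "('t \<Rightarrow> 'l) \<times> ('t \<Rightarrow> 'r regval) \<times> 'x memval"

inductive sc_step :: "('t, 'l, 'x, 'r) program \<Rightarrow> ('t, 'l, 'x, 'r) sc_config \<Rightarrow> ('t, 'l, 'x, 'r) sc_config \<Rightarrow> bool"
  for P where
  "\<lbrakk> t \<in> threads P; (pc t, i, l') \<in> code P t; sc_inst i (regs t) m \<rho>' m' \<rbrakk>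
   \<Longrightarrow> sc_step P (pc, regs, m) (pc(t := l'), regs(t := \<rho>'), m')"

definition sc_reachable :: "('t, 'l, 'x, 'r) program \<Rightarrow> 'x memval set" where
  "sc_reachable P = {m. \<exists>pc regs. (sc_step P)\<^sup>*\<^sup>* (start P, \<lambda>_ _. 0, \<lambda>_. 0) (pc, regs, m)}"

definition view :: "'x memval \<Rightarrow> ('x \<times> int) list \<Rightarrow> 'x \<Rightarrow> int" where
  "view m b x = foldl (\<lambda>v (y, w). if y = x then w else v) (m x) b"

inductive tso_inst :: "('x, 'r) inst \<Rightarrow> 'r regval \<Rightarrow> 'x memval \<Rightarrow> ('x \<times> int) list
    \<Rightarrow> 'r regval \<Rightarrow> 'x memval \<Rightarrow> ('x \<times> int) list \<Rightarrow> bool" where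
  tso_write: "tso_inst (Write x e) \<rho> m b \<rho> m (b @ [(x, e \<rho>)])"
| tso_assign: "tso_inst (Assign r e) \<rho> m b (\<rho>(r := e \<rho>)) m b"
| tso_read: "tso_inst (Read r x) \<rho> m b (\<rho>(r := view m b x)) m b"
| tso_fence: "tso_inst Fence \<rho> m [] \<rho> m []"
| tso_cas_succ: "m x = e1 \<rho> \<Longrightarrow> tso_inst (Cas r x e1 e2) \<rho> m [] (\<rho>(r := 1)) (m(x := e2 \<rho>)) []"
| tso_cas_fail: "m x \<noteq> e1 \<rho> \<Longrightarrow> tso_inst (Cas r x e1 e2) \<rho> m [] (\<rho>(r := 0)) m []"
| tso_skip: "tso_inst Skip \<rho> m b \<rho> m b"
| tso_assume: "c \<rho> \<Longrightarrow> tso_inst (Assume c) \<rho> m b \<rho> m b"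
| tso_havoc: "\<phi> (\<rho>(r := v)) (view m b x) \<Longrightarrow> tso_inst (Havoc r x \<phi>) \<rho> m b (\<rho>(r := v)) m b"

type_synonym ('t, 'l, 'x, 'r) tso_config =
  "('t \<Rightarrow> 'l) \<times> ('t \<Rightarrow> 'r regval) \<times> 'x memval \<times> ('t \<Rightarrow> ('x \<times> int) list)"

inductive tso_step :: "('t, 'l, 'x, 'r) program \<Rightarrow> ('t, 'l, 'x, 'r) tso_config \<Rightarrow> ('t, 'l, 'x, 'r) tso_config \<Rightarrow> bool"
  for P where
  tso_exec: "\<lbrakk> t \<in> threads P; (pc t, i, l') \<in> code P t; tso_inst i (regs t) m (buf t) \<rho>' m' b' \<rbrakk>
   \<Longrightarrow> tso_step P (pc, regs, m, buf) (pc(t := l'), regs(t := \<rho>'), m', buf(t := b'))"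
| tso_flush: "\<lbrakk> t \<in> threads P; buf t = (x, v) # rest \<rbrakk>
   \<Longrightarrow> tso_step P (pc, regs, m, buf) (pc, regs, m(x := v), buf(t := rest))"

definition tso_reachable :: "('t, 'l, 'x, 'r) program \<Rightarrow> 'x memval set" where
  "tso_reachable P = {m. \<exists>pc regs. (tso_step P)\<^sup>*\<^sup>* (start P, \<lambda>_ _. 0, \<lambda>_. 0, \<lambda>_. [])
                                                    (pc, regs, m, \<lambda>_. [])}"

datatype memory_model = SC | TSO

definition reachable :: "memory_model \<Rightarrow> ('t, 'l, 'x, 'r) program \<Rightarrow> 'x memval set" where
  "reachable M P = (case M of SC \<Rightarrow> sc_reachable P | TSO \<Rightarrow> tso_reachable P)"

definition abstracts :: "memory_model \<Rightarrow> ('t, 'l, 'x, 'r) program \<Rightarrow> ('t, 'l, 'x, 'r) program \<Rightarrow> bool" where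
  "abstracts M P P' \<longleftrightarrow> reachable M P \<subseteq> reachable M P'"

end

theory Submission
  imports Defs
begin

theorem lemma3:
  fixes P P' :: "('t, 'l, 'x::finite, 'r::finite) program"
    and t :: 't and l1 l2 :: 'l and r :: 'r and x :: 'x
    and \<phi> :: "'r regval \<Rightarrow> int \<Rightarrow> bool"
  assumes "wf_program P"
    and "t \<in> threads P"
    and "(l1, Read r x, l2) \<in> code P t"
    and "\<forall>\<rho> v. v = \<rho> r \<longrightarrow> \<phi> \<rho> v"
    and "P' = P\<lparr>code := (code P)(t := (code P t - {(l1, Read r x, l2)}) \<union> {(l1, Havoc r x \<phi>, l2)})\<rparr>"
  shows "abstracts SC P P' \<and> abstracts TSO P P'"
proof -
  have thr: "threads P' = threads P" using assms(5) by simp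
  have codeP: "(l, i, l') \<in> code P t' \<Longrightarrow>
      (l, i, l') \<in> code P' t' \<or> (t' = t \<and> l = l1 \<and> i = Read r x \<and> l' = l2)" for l i l' t'
    using assms(5) by auto
  have hv: "(l1, Havoc r x \<phi>, l2) \<in> code P' t" using assms(5) by simp
  have phi: "\<phi> (\<rho>(r := v)) v" for \<rho> v using assms(4) by (metis fun_upd_same)
  have sc: "sc_step P c c' \<Longrightarrow> sc_step P' c c'" for c c'
  proof (induction rule: sc_step.induct)
    case (1 t' pc i l' regs m \<rho>' m')
    from codeP[OF 1(2)] show ?case
    proof
      assume "(pc t', i, l') \<in> code P' t'"
      then show ?thesis using 1 thr by (auto intro: sc_step.intros)
    next
      assume h: "t' = t \<and> pc t' = l1 \<and> i = Read r x \<and> l' = l2"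
      with 1(3) have "\<rho>' = (regs t)(r := m x)" "m' = m" by (auto elim: sc_inst.cases)
      moreover have "sc_inst (Havoc r x \<phi>) (regs t) m ((regs t)(r := m x)) m"
        by (rule sc_havoc) (rule phi)
      ultimately show ?thesis using h hv 1(1) thr sc_step.intros[of t P' pc "Havoc r x \<phi>" l2 regs m]
        by auto
    qed
  qed
  have tso: "tso_step P c c' \<Longrightarrow> tso_step P' c c'" for c c'
  proof (induction rule: tso_step.induct)
    case (tso_exec t' pc i l' regs m buf \<rho>' m' b')
    from codeP[OF tso_exec(2)] show ?case
    proof
      assume "(pc t', i, l') \<in> code P' t'"
      then show ?thesis using tso_exec thr by (auto intro: tso_step.intros)
    next
      assume h: "t' = t \<and> pc t' = l1 \<and> i = Read r x \<and> l' = l2"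
      with tso_exec(3) have "\<rho>' = (regs t)(r := view m (buf t) x)" "m' = m" "b' = buf t"
        by (auto elim: tso_inst.cases)
      moreover have "tso_inst (Havoc r x \<phi>) (regs t) m (buf t) ((regs t)(r := view m (buf t) x)) m (buf t)"
        by (rule tso_havoc) (rule phi)
      ultimately show ?thesis using h hv tso_exec(1) thr
          tso_step.tso_exec[of t P' pc "Havoc r x \<phi>" l2 regs m buf]
        by (metis fun_upd_triv)
    qed
  next
    case (tso_flush t' buf y v rest pc regs m)
    then show ?case using thr by (auto intro: tso_step.tso_flush)
  qed
  have st: "start P' = start P" using assms(5) by simp
  have "sc_reachable P \<subseteq> sc_reachable P'"
    unfolding sc_reachable_def st using mono_rtranclp[of "sc_step P" "sc_step P'"] sc by blast
  moreover have "tso_reachable P \<subseteq> tso_reachable P'"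
    unfolding tso_reachable_def st using mono_rtranclp[of "tso_step P" "tso_step P'"] tso by blast
  ultimately show ?thesis unfolding abstracts_def reachable_def by simp
qed

end
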